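(* Let $K$ be a pathwise connected poset and fix $o\in K$. The assignment sending a $\mathrm{C}^*$-net bundle $(\mathcal A,\jmath)_K$ over $K$ to its holonomy dynamical system $(\mathcal A_o,\pi_1^o(K),\jmath_* )$ induces a bijection between isomorphism classes of $\mathrm{C}^*$-net bundles over $K$ and isomorphism classes of $\mathrm{C}^*$-dynamical systems with group $\pi_1^o(K)$ (isomorphisms of dynamical systems being ${}^*$-isomorphisms $\eta$ with $\eta\circ\alpha_g=\beta_g\circ\eta$ for all $g$). In particular, the category of $\mathrm{C}^*$-net bundles over $K$, with morphisms of the form $(\phi,\mathrm{id}_K)$, is equivalent to the category of $\mathrm{C}^*$-dynamical systems $(\mathrm A,\pi_1^o(K),\alpha)$, with morphisms the ${}^*$-morphisms $\eta:\mathrm A\to\mathrm B$ satisfying $\eta\circ\alpha_g=\beta_g\circ\eta$ for all $g\in\pi_1^o(K)$.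
   Context: Poset homotopy. Let $K$ be a poset. The $0$-simplices are the elements of $K$; for $n\ge1$ an $n$-simplex $x$ consists of $n+1$ $(n-1)$-simplices $\partial_0x,\dots,\partial_nx$ together with an element $|x|\in K$ (the support) with $|\partial_ix|\le|x|$ for all $i$. For $a\le\tilde a$, $(\tilde a a)$ denotes the $1$-simplex with $\partial_1=a$, $\partial_0=\tilde a$ and support $\tilde a$. A path $p=b_n*\cdots*b_1$ is a finite sequence of $1$-simplices with $\partial_0b_{i}=\partial_1b_{i+1}$; it goes from $\partial_1b_1$ to $\partial_0b_n$; a loop over $o$ is a path from $o$ to $o$. $K$ is pathwise connected if any two elements are joined by a path. An elementary deformation of a path replaces two consecutive $1$-simplices $\partial_0c*\partial_2c$ by $\partial_1c$, or conversely, for some $2$-simplex $c$; homotopy $\sim$ is the equivalence relation generated. $\pi_1^o(K)$ is the group of homotopy classes of loops over $o$ with $[p][q]=[p*q]$. Nets. A net of $\mathrm{C}^*$-algebras $(\mathcal A,\jmath)_K$ assigns to each $o\in K$ a unital $\mathrm{C}^*$-algebra $\mathcal A_o$ and to each $a\le o$ a unital injective ${}^*$-morphism $\jmath_{oa}:\mathcal A_a\to\mathcal A_o$ with $\jmath_{oa}\circ\jmath_{ae}=\jmath_{oe}$ for $e\le a\le o$. It is a $\mathrm{C}^*$-net bundle if all $\jmath_{oa}$ are ${}^*$-isomorphisms; then set $\jmath_{ao}:=\jmath_{oa}^{-1}$. A morphism $(\phi,\mathrm f):(\mathcal A,\jmath)_K\to(\mathcal B,\imath)_P$ is an order preserving map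 $\mathrm f:K\to P$ together with ${}^*$-morphisms $\phi_o:\mathcal A_o\to\mathcal B_{\mathrm f(o)}$ with $\phi_o\circ\jmath_{oa}=\imath_{\mathrm f(o)\mathrm f(a)}\circ\phi_a$ for $a\le o$; it is an isomorphism if $\mathrm f$ is an order isomorphism and all $\phi_o$ are ${}^*$-isomorphisms. Holonomy. For a $\mathrm{C}^*$-net bundle and a $1$-simplex $b$ set $\jmath_b:=\jmath_{\partial_0b\,|b|}\circ\jmath_{|b|\,\partial_1b}$, and for a path $p=b_n*\cdots*b_1$ set $\jmath_p:=\jmath_{b_n}\circ\cdots\circ\jmath_{b_1}$; $\jmath_p$ depends only on the homotopy class of $p$. The holonomy dynamical system is $(\mathcal A_o,\pi_1^o(K),\jmath_* )$ with $\jmath_{*,[p]}:=\jmath_p$. *)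

theory Defs
  imports Complex_Main "HOL-Algebra.Group"
begin

record 'a cstar =
  ccarrier :: "'a set"
  cadd :: "'a \<Rightarrow> 'a \<Rightarrow> 'a"
  cmul :: "'a \<Rightarrow> 'a \<Rightarrow> 'a"
  cscale :: "complex \<Rightarrow> 'a \<Rightarrow> 'a"
  cinvol :: "'a \<Rightarrow> 'a"
  cnorm :: "'a \<Rightarrow> real"
  czero :: 'a
  cone :: 'a

definition cdist :: "'a cstar \<Rightarrow> 'a \<Rightarrow> 'a \<Rightarrow> real" where
  "cdist A x y = cnorm A (cadd A x (cscale A (-1) y))"

definition unital_cstar_alg :: "'a cstar \<Rightarrow> bool" where
  "unital_cstar_alg A \<longleftrightarrow>
    \<comment> \<open>closure\<close>
    czero A \<in> ccarrier A \<and> cone A \<in> ccarrier A \<and>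
    (\<forall>x\<in>ccarrier A. \<forall>y\<in>ccarrier A. cadd A x y \<in> ccarrier A \<and> cmul A x y \<in> ccarrier A) \<and>
    (\<forall>c. \<forall>x\<in>ccarrier A. cscale A c x \<in> ccarrier A) \<and>
    (\<forall>x\<in>ccarrier A. cinvol A x \<in> ccarrier A) \<and>
    \<comment> \<open>complex vector space\<close>
    (\<forall>x\<in>ccarrier A. \<forall>y\<in>ccarrier A. \<forall>z\<in>ccarrier A.
        cadd A (cadd A x y) z = cadd A x (cadd A y z)) \<and>
    (\<forall>x\<in>ccarrier A. \<forall>y\<in>ccarrier A. cadd A x y = cadd A y x) \<and>
    (\<forall>x\<in>ccarrier A. cadd A x (czero A) = x) \<and>
    (\<forall>x\<in>ccarrier A. \<exists>y\<in>ccarrier A. cadd A x y = czero A) \<and>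
    (\<forall>c. \<forall>x\<in>ccarrier A. \<forall>y\<in>ccarrier A.
        cscale A c (cadd A x y) = cadd A (cscale A c x) (cscale A c y)) \<and>
    (\<forall>c d. \<forall>x\<in>ccarrier A. cscale A (c + d) x = cadd A (cscale A c x) (cscale A d x)) \<and>
    (\<forall>c d. \<forall>x\<in>ccarrier A. cscale A (c * d) x = cscale A c (cscale A d x)) \<and>
    (\<forall>x\<in>ccarrier A. cscale A 1 x = x) \<and>
    \<comment> \<open>associative unital algebra\<close>
    (\<forall>x\<in>ccarrier A. \<forall>y\<in>ccarrier A. \<forall>z\<in>ccarrier A.
        cmul A (cmul A x y) z = cmul A x (cmul A y z)) \<and>
    (\<forall>x\<in>ccarrier A. \<forall>y\<in>ccarrier A. \<forall>z\<in>ccarrier A.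
        cmul A x (cadd A y z) = cadd A (cmul A x y) (cmul A x z) \<and>
        cmul A (cadd A x y) z = cadd A (cmul A x z) (cmul A y z)) \<and>
    (\<forall>c. \<forall>x\<in>ccarrier A. \<forall>y\<in>ccarrier A.
        cmul A (cscale A c x) y = cscale A c (cmul A x y) \<and>
        cmul A x (cscale A c y) = cscale A c (cmul A x y)) \<and>
    (\<forall>x\<in>ccarrier A. cmul A (cone A) x = x \<and> cmul A x (cone A) = x) \<and>
    \<comment> \<open>involution\<close>
    (\<forall>x\<in>ccarrier A. cinvol A (cinvol A x) = x) \<and>
    (\<forall>x\<in>ccarrier A. \<forall>y\<in>ccarrier A. cinvol A (cadd A x y) = cadd A (cinvol A x) (cinvol A y)) \<and>
    (\<forall>c. \<forall>x\<in>ccarrier A. cinvol A (cscale A c x) = cscale A (cnj c) (cinvol A x)) \<and>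
    (\<forall>x\<in>ccarrier A. \<forall>y\<in>ccarrier A. cinvol A (cmul A x y) = cmul A (cinvol A y) (cinvol A x)) \<and>
    \<comment> \<open>submultiplicative norm\<close>
    (\<forall>x\<in>ccarrier A. cnorm A x \<ge> 0 \<and> (cnorm A x = 0 \<longleftrightarrow> x = czero A)) \<and>
    (\<forall>x\<in>ccarrier A. \<forall>y\<in>ccarrier A. cnorm A (cadd A x y) \<le> cnorm A x + cnorm A y) \<and>
    (\<forall>c. \<forall>x\<in>ccarrier A. cnorm A (cscale A c x) = cmod c * cnorm A x) \<and>
    (\<forall>x\<in>ccarrier A. \<forall>y\<in>ccarrier A. cnorm A (cmul A x y) \<le> cnorm A x * cnorm A y) \<and>
    \<comment> \<open>completeness\<close>
    (\<forall>s::nat \<Rightarrow> 'a. (\<forall>n. s n \<in> ccarrier A) \<longrightarrow>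
        (\<forall>e>0. \<exists>N. \<forall>m\<ge>N. \<forall>n\<ge>N. cdist A (s m) (s n) < e) \<longrightarrow>
        (\<exists>l\<in>ccarrier A. \<forall>e>0. \<exists>N. \<forall>n\<ge>N. cdist A (s n) l < e)) \<and>
    \<comment> \<open>C*-identity\<close>
    (\<forall>x\<in>ccarrier A. cnorm A (cmul A (cinvol A x) x) = (cnorm A x)\<^sup>2)"

definition star_morphism :: "('a \<Rightarrow> 'b) \<Rightarrow> 'a cstar \<Rightarrow> 'b cstar \<Rightarrow> bool" where
  "star_morphism f A B \<longleftrightarrow>
    (\<forall>x\<in>ccarrier A. f x \<in> ccarrier B) \<and>
    (\<forall>x\<in>ccarrier A. \<forall>y\<in>ccarrier A. f (cadd A x y) = cadd B (f x) (f y)) \<and>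
    (\<forall>x\<in>ccarrier A. \<forall>y\<in>ccarrier A. f (cmul A x y) = cmul B (f x) (f y)) \<and>
    (\<forall>c. \<forall>x\<in>ccarrier A. f (cscale A c x) = cscale B c (f x)) \<and>
    (\<forall>x\<in>ccarrier A. f (cinvol A x) = cinvol B (f x))"

definition unital_star_morphism :: "('a \<Rightarrow> 'b) \<Rightarrow> 'a cstar \<Rightarrow> 'b cstar \<Rightarrow> bool" where
  "unital_star_morphism f A B \<longleftrightarrow> star_morphism f A B \<and> f (cone A) = cone B"

definition star_isomorphism :: "('a \<Rightarrow> 'b) \<Rightarrow> 'a cstar \<Rightarrow> 'b cstar \<Rightarrow> bool" where
  "star_isomorphism f A B \<longleftrightarrow> star_morphism f A B \<and> bij_betw f (ccarrier A) (ccarrier B)"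

type_synonym 'k simplex1 = "'k \<times> 'k \<times> 'k"

definition d0 :: "'k simplex1 \<Rightarrow> 'k" where "d0 b = fst b"
definition d1 :: "'k simplex1 \<Rightarrow> 'k" where "d1 b = fst (snd b)"
definition supp :: "'k simplex1 \<Rightarrow> 'k" where "supp b = snd (snd b)"

definition is_simplex1 :: "('k::order) simplex1 \<Rightarrow> bool" where
  "is_simplex1 b \<longleftrightarrow> d0 b \<le> supp b \<and> d1 b \<le> supp b"

text \<open>A 2-simplex: three 1-simplices (faces 0,1,2) and a support, subject to the
  simplicial identities.\<close>
type_synonym 'k simplex2 = "'k simplex1 \<times> 'k simplex1 \<times> 'k simplex1 \<times> 'k"

definition is_simplex2 :: "('k::order) simplex2 \<Rightarrow> bool" where
  "is_simplex2 c \<longleftrightarrow> (case c of (c0, c1, c2, s) \<Rightarrow>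
     is_simplex1 c0 \<and> is_simplex1 c1 \<and> is_simplex1 c2 \<and>
     supp c0 \<le> s \<and> supp c1 \<le> s \<and> supp c2 \<le> s \<and>
     d0 c1 = d0 c0 \<and> d0 c2 = d1 c0 \<and> d1 c2 = d1 c1)"

text \<open>A path b_n * ... * b_1 is represented by the list [b_1, ..., b_n]
  (b_1 is traversed first).\<close>
definition is_path :: "('k::order) simplex1 list \<Rightarrow> 'k \<Rightarrow> 'k \<Rightarrow> bool" where
  "is_path p a a' \<longleftrightarrow> p \<noteq> [] \<and> (\<forall>b\<in>set p. is_simplex1 b) \<and>
     (\<forall>i. Suc i < length p \<longrightarrow> d0 (p ! i) = d1 (p ! Suc i)) \<and>
     d1 (hd p) = a \<and> d0 (last p) = a'"

definition pathwise_connected :: "('k::order) itself \<Rightarrow> bool" where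
  "pathwise_connected _ \<longleftrightarrow> (\<forall>a b::'k. \<exists>p. is_path p a b)"

text \<open>Elementary deformation: replace the consecutive pair d0 c * d2 c by d1 c.\<close>
definition elem_deform :: "('k::order) simplex1 list \<Rightarrow> 'k simplex1 list \<Rightarrow> bool" where
  "elem_deform p q \<longleftrightarrow> (\<exists>xs ys c0 c1 c2 s. is_simplex2 (c0, c1, c2, s) \<and>
      p = xs @ [c2, c0] @ ys \<and> q = xs @ [c1] @ ys)"

definition homotopic :: "('k::order) simplex1 list \<Rightarrow> 'k simplex1 list \<Rightarrow> bool" where
  "homotopic p q \<longleftrightarrow> (p, q) \<in> ({(x, y). elem_deform x y} \<union> {(x, y). elem_deform y x})\<^sup>*"

definition hclass :: "('k::order) simplex1 list \<Rightarrow> 'k simplex1 list set" where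
  "hclass p = {q. homotopic p q}"

text \<open>The fundamental group pi_1^o(K) as a monoid record over homotopy classes of loops;
  [p][q] = [p * q], where p * q (q first, then p) is the list q @ p.\<close>
definition pi1 :: "'k::order \<Rightarrow> 'k simplex1 list set monoid" where
  "pi1 w = \<lparr> carrier = {hclass p | p. is_path p w w},
             mult = (\<lambda>X Y. hclass ((SOME q. q \<in> Y) @ (SOME p. p \<in> X))),
             one = hclass [(w, w, w)] \<rparr>"

definition dynsys :: "'a cstar \<Rightarrow> ('g, 'm) monoid_scheme \<Rightarrow> ('g \<Rightarrow> 'a \<Rightarrow> 'a) \<Rightarrow> bool" where
  "dynsys A G \<alpha> \<longleftrightarrow> unital_cstar_alg A \<and>
     (\<forall>g\<in>carrier G. star_isomorphism (\<alpha> g) A A) \<and>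
     (\<forall>g\<in>carrier G. \<forall>h\<in>carrier G. \<forall>x\<in>ccarrier A. \<alpha> (g \<otimes>\<^bsub>G\<^esub> h) x = \<alpha> g (\<alpha> h x)) \<and>
     (\<forall>x\<in>ccarrier A. \<alpha> \<one>\<^bsub>G\<^esub> x = x)"

definition equivariant :: "('a \<Rightarrow> 'b) \<Rightarrow> 'a cstar \<Rightarrow> ('g, 'm) monoid_scheme \<Rightarrow>
    ('g \<Rightarrow> 'a \<Rightarrow> 'a) \<Rightarrow> 'b cstar \<Rightarrow> ('g \<Rightarrow> 'b \<Rightarrow> 'b) \<Rightarrow> bool" where
  "equivariant \<eta> A G \<alpha> B \<beta> \<longleftrightarrow>
     (\<forall>g\<in>carrier G. \<forall>x\<in>ccarrier A. \<eta> (\<alpha> g x) = \<beta> g (\<eta> x))"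

definition dynsys_iso :: "'a cstar \<Rightarrow> ('g, 'm) monoid_scheme \<Rightarrow> ('g \<Rightarrow> 'a \<Rightarrow> 'a) \<Rightarrow>
    'b cstar \<Rightarrow> ('g \<Rightarrow> 'b \<Rightarrow> 'b) \<Rightarrow> bool" where
  "dynsys_iso A G \<alpha> B \<beta> \<longleftrightarrow>
     (\<exists>\<eta>. star_isomorphism \<eta> A B \<and> equivariant \<eta> A G \<alpha> B \<beta>)"

section \<open>C*-net bundles over a poset (the whole type 'k)\<close>

definition net_bundle :: "('k::order \<Rightarrow> 'a cstar) \<Rightarrow> ('k \<Rightarrow> 'k \<Rightarrow> 'a \<Rightarrow> 'a) \<Rightarrow> bool" where
  "net_bundle A j \<longleftrightarrow> (\<forall>w. unital_cstar_alg (A w)) \<and>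
     (\<forall>a w. a \<le> w \<longrightarrow> unital_star_morphism (j w a) (A a) (A w) \<and>
                     bij_betw (j w a) (ccarrier (A a)) (ccarrier (A w))) \<and>
     (\<forall>e a w. e \<le> a \<longrightarrow> a \<le> w \<longrightarrow> (\<forall>x\<in>ccarrier (A e). j w a (j a e x) = j w e x))"

text \<open>Morphisms of nets over K of the form (phi, id_K).\<close>
definition net_morphism :: "('k::order \<Rightarrow> 'a cstar) \<Rightarrow> ('k \<Rightarrow> 'k \<Rightarrow> 'a \<Rightarrow> 'a) \<Rightarrow>
    ('k \<Rightarrow> 'b cstar) \<Rightarrow> ('k \<Rightarrow> 'k \<Rightarrow> 'b \<Rightarrow> 'b) \<Rightarrow> ('k \<Rightarrow> 'a \<Rightarrow> 'b) \<Rightarrow> bool" where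
  "net_morphism A j B i \<phi> \<longleftrightarrow> (\<forall>w. star_morphism (\<phi> w) (A w) (B w)) \<and>
     (\<forall>a w. a \<le> w \<longrightarrow> (\<forall>x\<in>ccarrier (A a). \<phi> w (j w a x) = i w a (\<phi> a x)))"

definition net_iso :: "('k::order \<Rightarrow> 'a cstar) \<Rightarrow> ('k \<Rightarrow> 'k \<Rightarrow> 'a \<Rightarrow> 'a) \<Rightarrow>
    ('k \<Rightarrow> 'b cstar) \<Rightarrow> ('k \<Rightarrow> 'k \<Rightarrow> 'b \<Rightarrow> 'b) \<Rightarrow> bool" where
  "net_iso A j B i \<longleftrightarrow> (\<exists>\<phi>. net_morphism A j B i \<phi> \<and>
     (\<forall>w. star_isomorphism (\<phi> w) (A w) (B w)))"

text \<open>j_b = j_{d0 b, |b|} o j_{|b|, d1 b}, with j_{a o} the inverse of j_{o a}.\<close>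
definition hol1 :: "('k::order \<Rightarrow> 'a cstar) \<Rightarrow> ('k \<Rightarrow> 'k \<Rightarrow> 'a \<Rightarrow> 'a) \<Rightarrow> 'k simplex1 \<Rightarrow> 'a \<Rightarrow> 'a" where
  "hol1 A j b = inv_into (ccarrier (A (d0 b))) (j (supp b) (d0 b)) \<circ> j (supp b) (d1 b)"

text \<open>j_p = j_{b_n} w ... o j_{b_1} for p = [b_1, ..., b_n].\<close>
definition holp :: "('k::order \<Rightarrow> 'a cstar) \<Rightarrow> ('k \<Rightarrow> 'k \<Rightarrow> 'a \<Rightarrow> 'a) \<Rightarrow> 'k simplex1 list \<Rightarrow> 'a \<Rightarrow> 'a" where
  "holp A j p = foldl (\<lambda>f b. hol1 A j b \<circ> f) id p"

definition holonomy :: "('k::order \<Rightarrow> 'a cstar) \<Rightarrow> ('k \<Rightarrow> 'k \<Rightarrow> 'a \<Rightarrow> 'a) \<Rightarrow>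
    'k simplex1 list set \<Rightarrow> 'a \<Rightarrow> 'a" where
  "holonomy A j X = holp A j (SOME p. p \<in> X)"

end

theory Submission
  imports Defs
begin


fun pth :: "('k::order) simplex1 list \<Rightarrow> 'k \<Rightarrow> 'k \<Rightarrow> bool" where
  "pth [] a a' = (a = a')"
| "pth (b#p) a a' = (is_simplex1 b \<and> d1 b = a \<and> pth p (d0 b) a')"

lemma pth_append: "pth (p@q) a a'' \<longleftrightarrow> (\<exists>m. pth p a m \<and> pth q m a'')"
  by (induction p arbitrary: a) auto

lemma pth_last: "pth p a a' \<Longrightarrow> p \<noteq> [] \<Longrightarrow> d0 (last p) = a' \<and> is_simplex1 (last p)"
  by (induction p arbitrary: a) auto

lemma is_path_pth: "is_path p a a' \<longleftrightarrow> p \<noteq> [] \<and> pth p a a'"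
proof (induction p arbitrary: a)
  case Nil
  then show ?case by (simp add: is_path_def)
next
  case (Cons b p)
  show ?case
  proof (cases p)
    case Nil
    then show ?thesis by (auto simp: is_path_def)
  next
    case (Cons c p')
    have e: "(\<forall>i. Suc i < length (b#p) \<longrightarrow> d0 ((b#p) ! i) = d1 ((b#p) ! Suc i)) \<longleftrightarrow>
          d0 b = d1 c \<and> (\<forall>i. Suc i < length p \<longrightarrow> d0 (p ! i) = d1 (p ! Suc i))" (is "?L \<longleftrightarrow> ?R")
    proof
      assume L: ?L
      have "d0 b = d1 c" using L[rule_format, of 0] Cons by simp
      moreover have "\<forall>i. Suc i < length p \<longrightarrow> d0 (p ! i) = d1 (p ! Suc i)"
      proof (intro allI impI)
        fix i assume "Suc i < length p"
        then show "d0 (p ! i) = d1 (p ! Suc i)" using L[rule_format, of "Suc i"] by simp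
      qed
      ultimately show ?R by blast
    next
      assume R: ?R
      show ?L
      proof (intro allI impI)
        fix i assume i: "Suc i < length (b#p)"
        show "d0 ((b#p) ! i) = d1 ((b#p) ! Suc i)"
        proof (cases i)
          case 0 then show ?thesis using R Cons by simp
        next
          case (Suc k) then show ?thesis using R i by simp
        qed
      qed
    qed
    have IH: "((\<forall>x\<in>set p. is_simplex1 x) \<and> (\<forall>i. Suc i < length p \<longrightarrow> d0 (p ! i) = d1 (p ! Suc i)) \<and>
        d1 c = d0 b \<and> d0 (last p) = a') \<longleftrightarrow> pth p (d0 b) a'"
      using Cons.IH[of "d0 b"] Cons by (simp add: is_path_def)
    have "is_path (b#p) a a' \<longleftrightarrow> is_simplex1 b \<and> (\<forall>x\<in>set p. is_simplex1 x) \<and>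
       (d0 b = d1 c \<and> (\<forall>i. Suc i < length p \<longrightarrow> d0 (p ! i) = d1 (p ! Suc i))) \<and> d1 b = a \<and> d0 (last p) = a'"
      unfolding is_path_def e using Cons by simp
    then show ?thesis using IH by auto
  qed
qed

definition flip :: "'k simplex1 \<Rightarrow> 'k simplex1" where "flip b = (d1 b, d0 b, supp b)"
definition rev_path :: "'k simplex1 list \<Rightarrow> 'k simplex1 list" where "rev_path p = rev (map flip p)"

lemma flip_simps[simp]: "d0 (flip b) = d1 b" "d1 (flip b) = d0 b" "supp (flip b) = supp b"
  "flip (flip b) = b"
  by (auto simp: flip_def d0_def d1_def supp_def)

lemma simp1_flip[simp]: "is_simplex1 (flip b) = is_simplex1 b"
  by (auto simp: is_simplex1_def)

lemma rev_path_simps[simp]: "rev_path [] = []" "rev_path (b#p) = rev_path p @ [flip b]"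
  "rev_path (p@q) = rev_path q @ rev_path p" "rev_path (rev_path p) = p"
  "rev_path p = [] \<longleftrightarrow> p = []"
  by (auto simp: rev_path_def rev_map[symmetric] map_idI)

lemma pth_rev: "pth p a a' \<Longrightarrow> pth (rev_path p) a' a"
  by (induction p arbitrary: a) (auto simp: pth_append)

lemma d_simps[simp]: "d0 (x,y,s) = x" "d1 (x,y,s) = y" "supp (x,y,s) = s"
  by (auto simp: d0_def d1_def supp_def)

lemma simp1_triple[simp]: "is_simplex1 (x,y,s) \<longleftrightarrow> x \<le> s \<and> y \<le> s"
  by (simp add: is_simplex1_def)

lemma simp2_iff: "is_simplex2 (c0,c1,c2,s) \<longleftrightarrow> is_simplex1 c0 \<and> is_simplex1 c1 \<and> is_simplex1 c2 \<and>
     supp c0 \<le> s \<and> supp c1 \<le> s \<and> supp c2 \<le> s \<and>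
     d0 c1 = d0 c0 \<and> d0 c2 = d1 c0 \<and> d1 c2 = d1 c1"
  by (simp add: is_simplex2_def)




lemma hom_refl[simp]: "homotopic p p"
  by (simp add: homotopic_def)

lemma hom_trans: "homotopic p q \<Longrightarrow> homotopic q r \<Longrightarrow> homotopic p r"
  unfolding homotopic_def by (rule rtrancl_trans)

lemma hom_sym: "homotopic p q \<Longrightarrow> homotopic q p"
  unfolding homotopic_def
proof (induction rule: rtrancl_induct)
  case base
  then show ?case by simp
next
  case (step y z)
  have "(z, y) \<in> {(x, y). elem_deform x y} \<union> {(x, y). elem_deform y x}"
    using step(2) by blast
  then show ?case using step(3) by (rule converse_rtrancl_into_rtrancl)
qed

lemmas [trans] = hom_trans

lemma hom_step: "elem_deform p q \<Longrightarrow> homotopic p q"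
  unfolding homotopic_def by auto

lemma ed_cong: "elem_deform p q \<Longrightarrow> elem_deform (l@p@r) (l@q@r)"
  unfolding elem_deform_def apply (elim exE conjE)
  subgoal for xs ys c0 c1 c2 s
    by (rule exI[of _ "l@xs"], rule exI[of _ "ys@r"], rule exI[of _ c0], rule exI[of _ c1], rule exI[of _ c2], rule exI[of _ s]) simp
  done

lemma hom_cong: "homotopic p q \<Longrightarrow> homotopic (l@p@r) (l@q@r)"
  unfolding homotopic_def
proof (induction rule: rtrancl_induct)
  case base
  then show ?case by simp
next
  case (step y z)
  have "(l@y@r, l@z@r) \<in> {(x, y). elem_deform x y} \<union> {(x, y). elem_deform y x}"
    using step(2) ed_cong[of y z l r] ed_cong[of z y l r] by blast
  with step(3) show ?case by (rule rtrancl_into_rtrancl)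
qed

lemma hom_cong2: "homotopic p p' \<Longrightarrow> homotopic q q' \<Longrightarrow> homotopic (p@q) (p'@q')"
proof -
  assume a: "homotopic p p'" "homotopic q q'"
  have 1: "homotopic (p@q) (p'@q)" using hom_cong[OF a(1), of "[]" q] by simp
  have 2: "homotopic (p'@q) (p'@q')" using hom_cong[OF a(2), of p' "[]"] by simp
  show ?thesis by (rule hom_trans[OF 1 2])
qed

lemma hom_2s: "is_simplex2 (c0,c1,c2,s) \<Longrightarrow> homotopic [c2,c0] [c1]"
  apply (intro hom_step) unfolding elem_deform_def
  by (rule exI[of _ "[]"], rule exI[of _ "[]"], rule exI[of _ c0], rule exI[of _ c1], rule exI[of _ c2], rule exI[of _ s]) simp

lemma hom_2s_ctx: "is_simplex2 (c0,c1,c2,s) \<Longrightarrow> homotopic (l@[c2,c0]@r) (l@[c1]@r)"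
  by (rule hom_cong[OF hom_2s])

lemma hom_degen: "(x::'k::order) \<le> s \<Longrightarrow> homotopic [(x,x,s)] [(x,x,x)]"
proof -
  assume xs: "x \<le> s"
  have h1: "homotopic [(x,x,x),(x,x,s)] [(x,x,x)]"
    by (rule hom_2s[of _ _ _ s]) (simp add: simp2_iff xs)
  have h2: "homotopic [(x,x,x),(x,x,s)] [(x,x,s)]"
    by (rule hom_2s[of _ _ _ s]) (simp add: simp2_iff xs)
  show ?thesis by (rule hom_trans[OF hom_sym[OF h2] h1])
qed

lemma hom_runit: "is_simplex1 d \<Longrightarrow> d0 d = x \<Longrightarrow> homotopic [d,(x,x,x)] [d]"
  by (rule hom_2s[of _ _ _ "supp d"]) (auto simp: simp2_iff is_simplex1_def)

lemma hom_lunit: "is_simplex1 d \<Longrightarrow> d1 d = x \<Longrightarrow> homotopic [(x,x,x),d] [d]"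
  by (rule hom_2s[of _ _ _ "supp d"]) (auto simp: simp2_iff is_simplex1_def)

lemma hom_runit_list: "q \<noteq> [] \<Longrightarrow> is_simplex1 (last q) \<Longrightarrow> d0 (last q) = x \<Longrightarrow>
   homotopic (q @ [(x,x,x)]) q"
proof -
  assume "q \<noteq> []" "is_simplex1 (last q)" "d0 (last q) = x"
  then obtain q' d where q: "q = q' @ [d]" "is_simplex1 d" "d0 d = x"
    by (cases q rule: rev_cases) auto
  show ?thesis using hom_cong[OF hom_runit[OF q(2,3)], of q' "[]"] q by simp
qed

lemma hom_lunit_list: "q \<noteq> [] \<Longrightarrow> is_simplex1 (hd q) \<Longrightarrow> d1 (hd q) = x \<Longrightarrow>
   homotopic ((x,x,x) # q) q"
proof -
  assume "q \<noteq> []" "is_simplex1 (hd q)" "d1 (hd q) = x"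
  then obtain q' d where q: "q = d # q'" "is_simplex1 d" "d1 d = x"
    by (cases q) auto
  show ?thesis using hom_cong[OF hom_lunit[OF q(2,3)], of "[]" q'] q by simp
qed

lemma hom_cancel_pair: "q \<noteq> [] \<Longrightarrow> is_simplex1 (last q) \<Longrightarrow> is_simplex1 b \<Longrightarrow> d0 (last q) = d0 b \<Longrightarrow>
   homotopic (q @ [flip b, b]) q"
proof -
  assume a: "q \<noteq> []" "is_simplex1 (last q)" "is_simplex1 b" "d0 (last q) = d0 b"
  obtain x y s where b: "b = (x,y,s)" by (rule prod_cases3)
  have xs: "x \<le> s" using a(3) b by simp
  have "homotopic [flip b, b] [(x,x,s)]"
    by (rule hom_2s[of _ _ _ s]) (use a(3) b in \<open>auto simp: simp2_iff flip_def\<close>)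
  also have "homotopic \<dots> [(x,x,x)]" by (rule hom_degen[OF xs])
  finally have h1: "homotopic [flip b, b] [(x,x,x)]" .
  have "homotopic (q @ [flip b, b]) (q @ [(x,x,x)])" using hom_cong[OF h1, of q "[]"] by simp
  also have "homotopic \<dots> q" by (rule hom_runit_list) (use a b in auto)
  finally show ?thesis .
qed

lemma hom_cancel_path: "pth p m m' \<Longrightarrow> q \<noteq> [] \<Longrightarrow> is_simplex1 (last q) \<Longrightarrow> d0 (last q) = m' \<Longrightarrow>
   homotopic (q @ rev_path p @ p) q"
proof (induction p arbitrary: q m' rule: rev_induct)
  case Nil
  then show ?case by simp
next
  case (snoc b p')
  from snoc.prems(1) obtain y where p': "pth p' m y" and b: "is_simplex1 b" "d1 b = y" "d0 b = m'"
    by (auto simp: pth_append)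
  have ih: "homotopic ((q @ [flip b]) @ rev_path p' @ p') (q @ [flip b])"
  proof (cases "p' = []")
    case True then show ?thesis by simp
  next
    case False
    show ?thesis by (rule snoc.IH[OF p']) (use b in auto)
  qed
  have cp: "homotopic (q @ [flip b, b]) q" by (rule hom_cancel_pair) (use snoc.prems b in auto)
  have "homotopic (q @ rev_path (p' @ [b]) @ p' @ [b]) (((q @ [flip b]) @ rev_path p' @ p') @ [b])"
    by simp
  also have "homotopic \<dots> ((q @ [flip b]) @ [b])" using hom_cong[OF ih, of "[]" "[b]"] by simp
  also have "homotopic \<dots> q" using cp by simp
  finally show ?case .
qed

lemma hclass_eq: "homotopic p q \<Longrightarrow> hclass p = hclass q"
proof -
  assume h: "homotopic p q"
  have "homotopic p r = homotopic q r" for r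
    using hom_trans[OF hom_sym[OF h], of r] hom_trans[OF h, of r] by blast
  then have "homotopic p = homotopic q" by (rule ext)
  then show ?thesis unfolding hclass_def by simp
qed

lemma hclass_mem: "p \<in> hclass p"
  by (simp add: hclass_def)

lemma some_hclass: "homotopic p (SOME q. q \<in> hclass p)"
  using someI[of "\<lambda>q. q \<in> hclass p", OF hclass_mem] by (simp add: hclass_def)

lemma pi1_mult: "mult (pi1 w) (hclass p) (hclass q) = hclass (q @ p)"
  unfolding pi1_def
  by (simp add: hclass_eq[OF hom_sym[OF hom_cong2[OF some_hclass[of q] some_hclass[of p]]]])

lemma pi1_one: "one (pi1 w) = hclass [(w,w,w)]"
  by (simp add: pi1_def)

lemma pi1_carrier: "is_path p w w \<Longrightarrow> hclass p \<in> carrier (pi1 w)"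
  by (auto simp: pi1_def)

lemma ed_pth: "elem_deform p q \<Longrightarrow> pth p a a' \<longleftrightarrow> pth q a a'"
  unfolding elem_deform_def by (auto simp: pth_append simp2_iff)

lemma hom_pth: "homotopic p q \<Longrightarrow> pth p a a' \<longleftrightarrow> pth q a a'"
  unfolding homotopic_def
  by (induction rule: rtrancl_induct) (auto simp: ed_pth)

lemma ed_ne: "elem_deform p q \<Longrightarrow> p \<noteq> [] \<and> q \<noteq> []"
  unfolding elem_deform_def by auto

lemma hom_ne: "homotopic p q \<Longrightarrow> p \<noteq> [] \<Longrightarrow> q \<noteq> []"
  unfolding homotopic_def
  by (induction rule: rtrancl_induct) (auto dest: ed_ne)

lemma hom_path: "homotopic p q \<Longrightarrow> is_path p a a' \<Longrightarrow> is_path q a a'"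
  by (simp add: is_path_pth) (metis hom_ne hom_pth)

lemma pi1_carrierE: "X \<in> carrier (pi1 w) \<Longrightarrow> \<exists>p. is_path p w w \<and> X = hclass p"
  by (auto simp: pi1_def)

lemma some_in_class: "is_path p w w \<Longrightarrow> is_path (SOME q. q \<in> hclass p) w w \<and> homotopic p (SOME q. q \<in> hclass p)"
  using some_hclass hom_path by blast




lemma uca_closed:
  assumes "unital_cstar_alg A"
  shows "\<And>x y. x \<in> ccarrier A \<Longrightarrow> y \<in> ccarrier A \<Longrightarrow> cadd A x y \<in> ccarrier A"
    "\<And>x y. x \<in> ccarrier A \<Longrightarrow> y \<in> ccarrier A \<Longrightarrow> cmul A x y \<in> ccarrier A"
    "\<And>x c. x \<in> ccarrier A \<Longrightarrow> cscale A c x \<in> ccarrier A"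
    "\<And>x. x \<in> ccarrier A \<Longrightarrow> cinvol A x \<in> ccarrier A"
    "cone A \<in> ccarrier A"
    "\<And>x. x \<in> ccarrier A \<Longrightarrow> cmul A x (cone A) = x"
    "\<And>x. x \<in> ccarrier A \<Longrightarrow> cmul A (cone A) x = x"
  using assms unfolding unital_cstar_alg_def by simp_all

lemma sm_comp: "star_morphism f A B \<Longrightarrow> star_morphism g B C \<Longrightarrow> star_morphism (g \<circ> f) A C"
  unfolding star_morphism_def by auto

lemma si_comp: "star_isomorphism f A B \<Longrightarrow> star_isomorphism g B C \<Longrightarrow> star_isomorphism (g \<circ> f) A C"
  unfolding star_isomorphism_def using sm_comp bij_betw_trans by blast

lemma inv_eq: "bij_betw f A' B' \<Longrightarrow> z \<in> A' \<Longrightarrow> f z = y \<Longrightarrow> inv_into A' f y = z"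
  by (metis bij_betw_imp_inj_on inv_into_f_f)

lemma si_inv:
  assumes U: "unital_cstar_alg A" and si: "star_isomorphism f A B"
  shows "star_isomorphism (inv_into (ccarrier A) f) B A"
proof -
  let ?g = "inv_into (ccarrier A) f"
  have bij: "bij_betw f (ccarrier A) (ccarrier B)" and sm: "star_morphism f A B"
    using si unfolding star_isomorphism_def by auto
  have bijg: "bij_betw ?g (ccarrier B) (ccarrier A)" by (rule bij_betw_inv_into[OF bij])
  have gin: "?g x \<in> ccarrier A" if "x \<in> ccarrier B" for x using bijg that bij_betw_apply by fast
  have fg: "f (?g x) = x" if "x \<in> ccarrier B" for x
    using bij that by (meson bij_betw_inv_into_right)
  have smf: "\<And>x y. x \<in> ccarrier A \<Longrightarrow> y \<in> ccarrier A \<Longrightarrow> f (cadd A x y) = cadd B (f x) (f y)"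
    "\<And>x y. x \<in> ccarrier A \<Longrightarrow> y \<in> ccarrier A \<Longrightarrow> f (cmul A x y) = cmul B (f x) (f y)"
    "\<And>c x. x \<in> ccarrier A \<Longrightarrow> f (cscale A c x) = cscale B c (f x)"
    "\<And>x. x \<in> ccarrier A \<Longrightarrow> f (cinvol A x) = cinvol B (f x)"
    using sm unfolding star_morphism_def by auto
  have "star_morphism ?g B A"
    unfolding star_morphism_def
  proof (intro conjI ballI allI)
    fix x assume x: "x \<in> ccarrier B"
    show "?g x \<in> ccarrier A" by (rule gin[OF x])
    show "?g (cinvol B x) = cinvol A (?g x)"
      by (rule inv_eq[OF bij]) (use gin[OF x] uca_closed[OF U] smf fg[OF x] in auto)
    fix c
    show "?g (cscale B c x) = cscale A c (?g x)"
      by (rule inv_eq[OF bij]) (use gin[OF x] uca_closed[OF U] smf fg[OF x] in auto)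
  next
    fix x y assume x: "x \<in> ccarrier B" and y: "y \<in> ccarrier B"
    show "?g (cadd B x y) = cadd A (?g x) (?g y)"
      by (rule inv_eq[OF bij]) (use gin[OF x] gin[OF y] uca_closed[OF U] smf fg[OF x] fg[OF y] in auto)
    show "?g (cmul B x y) = cmul A (?g x) (?g y)"
      by (rule inv_eq[OF bij]) (use gin[OF x] gin[OF y] uca_closed[OF U] smf fg[OF x] fg[OF y] in auto)
  qed
  then show ?thesis using bijg unfolding star_isomorphism_def by blast
qed

lemma si_id: "unital_cstar_alg A \<Longrightarrow> star_isomorphism id A A"
  unfolding star_isomorphism_def star_morphism_def using uca_closed by (auto simp: bij_betw_def)

lemma si_id': "unital_cstar_alg A \<Longrightarrow> star_isomorphism (\<lambda>x. x) A A"
  using si_id by (simp add: id_def)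

lemma si_unit:
  assumes UA: "unital_cstar_alg A" and UB: "unital_cstar_alg B" and si: "star_isomorphism f A B"
  shows "f (cone A) = cone B"
proof -
  have bij: "bij_betw f (ccarrier A) (ccarrier B)" and sm: "star_morphism f A B"
    using si unfolding star_isomorphism_def by auto
  obtain u where u: "u \<in> ccarrier A" "f u = cone B"
    using bij uca_closed(5)[OF UB] by (metis bij_betw_iff_bijections)
  have f1: "f (cone A) \<in> ccarrier B" using sm uca_closed(5)[OF UA] unfolding star_morphism_def by blast
  have "f (cone A) = cmul B (f (cone A)) (cone B)" using uca_closed(6)[OF UB f1] by simp
  also have "\<dots> = cmul B (f (cone A)) (f u)" using u by simp
  also have "\<dots> = f (cmul A (cone A) u)" using sm u(1) uca_closed(5)[OF UA] unfolding star_morphism_def by metis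
  also have "\<dots> = f u" using uca_closed(7)[OF UA u(1)] by simp
  finally show ?thesis using u by simp
qed

lemma si_in: "star_isomorphism f A B \<Longrightarrow> x \<in> ccarrier A \<Longrightarrow> f x \<in> ccarrier B"
  unfolding star_isomorphism_def star_morphism_def by blast

lemma si_inj: "star_isomorphism f A B \<Longrightarrow> x \<in> ccarrier A \<Longrightarrow> y \<in> ccarrier A \<Longrightarrow> f x = f y \<Longrightarrow> x = y"
  unfolding star_isomorphism_def by (meson bij_betw_imp_inj_on inj_onD)

lemma si_surj: "star_isomorphism f A B \<Longrightarrow> y \<in> ccarrier B \<Longrightarrow> \<exists>x\<in>ccarrier A. f x = y"
  unfolding star_isomorphism_def by (metis bij_betw_iff_bijections)

lemma si_sm: "star_isomorphism f A B \<Longrightarrow> star_morphism f A B"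
  unfolding star_isomorphism_def by blast

lemma sm_in: "star_morphism f A B \<Longrightarrow> x \<in> ccarrier A \<Longrightarrow> f x \<in> ccarrier B"
  unfolding star_morphism_def by blast




lemma nb_alg: "net_bundle A j \<Longrightarrow> unital_cstar_alg (A w)"
  unfolding net_bundle_def by blast

lemma nb_si: "net_bundle A j \<Longrightarrow> a \<le> w \<Longrightarrow> star_isomorphism (j w a) (A a) (A w)"
  unfolding net_bundle_def star_isomorphism_def unital_star_morphism_def by blast

lemma nb_comp: "net_bundle A j \<Longrightarrow> e \<le> a \<Longrightarrow> a \<le> w \<Longrightarrow> x \<in> ccarrier (A e) \<Longrightarrow> j w a (j a e x) = j w e x"
  unfolding net_bundle_def by blast

lemma nb_refl: assumes N: "net_bundle A j" and x: "x \<in> ccarrier (A w)" shows "j w w x = x"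
proof -
  have si: "star_isomorphism (j w w) (A w) (A w)" using nb_si[OF N] by simp
  have "j w w (j w w x) = j w w x" using nb_comp[OF N _ _ x] by simp
  then show ?thesis using si_inj[OF si si_in[OF si x] x] by simp
qed

lemma hol1_in:
  assumes N: "net_bundle A j" and b: "is_simplex1 b" and x: "x \<in> ccarrier (A (d1 b))"
  shows "hol1 A j b x \<in> ccarrier (A (d0 b)) \<and> j (supp b) (d0 b) (hol1 A j b x) = j (supp b) (d1 b) x"
proof -
  have s0: "star_isomorphism (j (supp b) (d0 b)) (A (d0 b)) (A (supp b))"
    and s1: "star_isomorphism (j (supp b) (d1 b)) (A (d1 b)) (A (supp b))"
    using nb_si[OF N] b unfolding is_simplex1_def by auto
  have bij: "bij_betw (j (supp b) (d0 b)) (ccarrier (A (d0 b))) (ccarrier (A (supp b)))"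
    using s0 unfolding star_isomorphism_def by blast
  have y: "j (supp b) (d1 b) x \<in> ccarrier (A (supp b))" by (rule si_in[OF s1 x])
  show ?thesis unfolding hol1_def comp_def
    using bij y by (meson bij_betw_inv_into_right bij_betw_apply bij_betw_inv_into)
qed

lemma hol1_upper:
  assumes N: "net_bundle A j" and b: "is_simplex1 b" and S: "supp b \<le> S" and x: "x \<in> ccarrier (A (d1 b))"
  shows "j S (d0 b) (hol1 A j b x) = j S (d1 b) x"
proof -
  note h = hol1_in[OF N b x]
  have b': "d0 b \<le> supp b" "d1 b \<le> supp b" using b unfolding is_simplex1_def by auto
  have "j S (supp b) (j (supp b) (d0 b) (hol1 A j b x)) = j S (d0 b) (hol1 A j b x)"
    by (rule nb_comp[OF N b'(1) S conjunct1[OF h]])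
  then have "j S (d0 b) (hol1 A j b x) = j S (supp b) (j (supp b) (d0 b) (hol1 A j b x))" by simp
  also have "\<dots> = j S (supp b) (j (supp b) (d1 b) x)" using h by simp
  also have "\<dots> = j S (d1 b) x" by (rule nb_comp[OF N b'(2) S x])
  finally show ?thesis .
qed

lemma hol1_char:
  assumes N: "net_bundle A j" and b: "is_simplex1 b" and S: "supp b \<le> S" and x: "x \<in> ccarrier (A (d1 b))"
    and y: "y \<in> ccarrier (A (d0 b))" and e: "j S (d0 b) y = j S (d1 b) x"
  shows "hol1 A j b x = y"
proof -
  have "d0 b \<le> S" using b S unfolding is_simplex1_def by auto
  then have s0: "star_isomorphism (j S (d0 b)) (A (d0 b)) (A S)" using nb_si[OF N] by blast
  show ?thesis using si_inj[OF s0 conjunct1[OF hol1_in[OF N b x]] y] hol1_upper[OF N b S x] e by simp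
qed

lemma hol1_si:
  assumes N: "net_bundle A j" and b: "is_simplex1 b"
  shows "star_isomorphism (hol1 A j b) (A (d1 b)) (A (d0 b))"
proof -
  have s0: "star_isomorphism (j (supp b) (d0 b)) (A (d0 b)) (A (supp b))"
    and s1: "star_isomorphism (j (supp b) (d1 b)) (A (d1 b)) (A (supp b))"
    using nb_si[OF N] b unfolding is_simplex1_def by auto
  show ?thesis unfolding hol1_def by (rule si_comp[OF s1 si_inv[OF nb_alg[OF N] s0]])
qed

lemma hol1_2s:
  assumes N: "net_bundle A j" and c: "is_simplex2 (c0,c1,c2,s)" and x: "x \<in> ccarrier (A (d1 c2))"
  shows "hol1 A j c0 (hol1 A j c2 x) = hol1 A j c1 x"
proof -
  have c': "is_simplex1 c0" "is_simplex1 c1" "is_simplex1 c2" "supp c0 \<le> s" "supp c1 \<le> s" "supp c2 \<le> s"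
     "d0 c1 = d0 c0" "d0 c2 = d1 c0" "d1 c2 = d1 c1" using c by (auto simp: simp2_iff)
  have y: "hol1 A j c2 x \<in> ccarrier (A (d1 c0))" using hol1_in[OF N c'(3) x] c'(8) by simp
  have x1: "x \<in> ccarrier (A (d1 c1))" using x c'(9) by simp
  show ?thesis
  proof (rule sym, rule hol1_char[OF N c'(2) c'(5) x1])
    show "hol1 A j c0 (hol1 A j c2 x) \<in> ccarrier (A (d0 c1))" using hol1_in[OF N c'(1) y] c'(7) by simp
    have "j s (d0 c0) (hol1 A j c0 (hol1 A j c2 x)) = j s (d1 c0) (hol1 A j c2 x)"
      by (rule hol1_upper[OF N c'(1) c'(4) y])
    also have "\<dots> = j s (d1 c2) x" using hol1_upper[OF N c'(3) c'(6) x] c'(8) by simp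
    finally show "j s (d0 c1) (hol1 A j c0 (hol1 A j c2 x)) = j s (d1 c1) x" using c'(7,9) by simp
  qed
qed

lemma hol1_flip:
  assumes N: "net_bundle A j" and b: "is_simplex1 b" and x: "x \<in> ccarrier (A (d1 b))"
  shows "hol1 A j (flip b) (hol1 A j b x) = x"
proof -
  have fb: "is_simplex1 (flip b)" using b by simp
  have y: "hol1 A j b x \<in> ccarrier (A (d1 (flip b)))" using hol1_in[OF N b x] by simp
  show ?thesis
    by (rule hol1_char[OF N fb _ y, of "supp b"]) (use x hol1_in[OF N b x] in auto)
qed

lemma holp_fold: fixes g :: "'a \<Rightarrow> 'a" and A :: "'k::order \<Rightarrow> 'a cstar"
  shows "foldl (\<lambda>f b. hol1 A j b \<circ> f) g p = holp A j p \<circ> g"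
  unfolding holp_def
proof (induction p arbitrary: g)
  case Nil then show ?case by simp
next
  case (Cons b p)
  show ?case using Cons.IH[of "hol1 A j b \<circ> g"] Cons.IH[of "hol1 A j b \<circ> id"] by (simp add: comp_assoc)
qed

lemma holp_Nil: "holp A j [] = id" by (simp add: holp_def)
lemma holp_Cons: "holp A j (b#p) = holp A j p \<circ> hol1 A j b"
  using holp_fold[of A j "hol1 A j b \<circ> id" p] by (simp add: holp_def)
lemma holp_append: "holp A j (p@q) = holp A j q \<circ> holp A j p"
  using holp_fold[of A j "holp A j p" q] by (simp add: holp_def)
lemmas holp_simps = holp_Nil holp_Cons holp_append

lemma holp_si: "net_bundle A j \<Longrightarrow> pth p a a' \<Longrightarrow> star_isomorphism (holp A j p) (A a) (A a')"
proof (induction p arbitrary: a)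
  case Nil then show ?case using si_id'[OF nb_alg[OF Nil.prems(1)], of a'] by (simp add: holp_simps)
next
  case (Cons b p)
  have b: "is_simplex1 b" "d1 b = a" "pth p (d0 b) a'" using Cons.prems by auto
  have "star_isomorphism (holp A j p \<circ> hol1 A j b) (A (d1 b)) (A a')"
    by (rule si_comp[OF hol1_si[OF Cons.prems(1) b(1)] Cons.IH[OF Cons.prems(1) b(3)]])
  from this b(2) show ?case by (simp only: holp_simps)
qed

lemma holp_in: "net_bundle A j \<Longrightarrow> pth p a a' \<Longrightarrow> x \<in> ccarrier (A a) \<Longrightarrow> holp A j p x \<in> ccarrier (A a')"
  by (rule si_in[OF holp_si])

lemma holp_rev: "net_bundle A j \<Longrightarrow> pth p a a' \<Longrightarrow> x \<in> ccarrier (A a) \<Longrightarrow>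
   holp A j (rev_path p) (holp A j p x) = x"
proof (induction p arbitrary: a x)
  case Nil then show ?case by (simp add: holp_simps)
next
  case (Cons b p)
  have b: "is_simplex1 b" "d1 b = a" "pth p (d0 b) a'" using Cons.prems by auto
  have x: "x \<in> ccarrier (A (d1 b))" using Cons.prems b by simp
  have "holp A j (rev_path (b#p)) (holp A j (b#p) x)
     = hol1 A j (flip b) (holp A j (rev_path p) (holp A j p (hol1 A j b x)))"
    by (simp add: holp_simps)
  also have "\<dots> = hol1 A j (flip b) (hol1 A j b x)"
    using Cons.IH[OF Cons.prems(1) b(3) conjunct1[OF hol1_in[OF Cons.prems(1) b(1) x]]] by simp
  also have "\<dots> = x" by (rule hol1_flip[OF Cons.prems(1) b(1) x])
  finally show ?case .
qed

lemma holp_ed: assumes N: "net_bundle A j" and ed: "elem_deform p q" and pp: "pth p a a'"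
  and x: "x \<in> ccarrier (A a)" shows "holp A j p x = holp A j q x"
proof -
  obtain xs ys c0 c1 c2 s where c: "is_simplex2 (c0,c1,c2,s)" and p: "p = xs @ [c2, c0] @ ys"
     and q: "q = xs @ [c1] @ ys" using ed unfolding elem_deform_def by blast
  obtain m where xs: "pth xs a m" and m: "m = d1 c2" using pp p by (auto simp: pth_append)
  have y: "holp A j xs x \<in> ccarrier (A (d1 c2))" using holp_in[OF N xs x] m by simp
  show ?thesis unfolding p q using hol1_2s[OF N c y] by (simp add: holp_simps)
qed

lemma holp_hom: assumes N: "net_bundle A j" and h: "homotopic p q" and pp: "pth p a a'"
  and x: "x \<in> ccarrier (A a)" shows "holp A j p x = holp A j q x"
  using h unfolding homotopic_def
proof (induction rule: rtrancl_induct)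
  case base then show ?case by simp
next
  case (step y z)
  have py: "pth y a a'" using hom_pth[of p y a a'] step(1) pp unfolding homotopic_def by simp
  have "holp A j y x = holp A j z x"
  proof (cases "elem_deform y z")
    case True then show ?thesis using holp_ed[OF N True py x] by simp
  next
    case False
    then have ed: "elem_deform z y" using step(2) by blast
    have pz: "pth z a a'" using ed_pth[OF ed] py by simp
    show ?thesis using holp_ed[OF N ed pz x] by simp
  qed
  then show ?case using step(3) by simp
qed

lemma holonomy_eq: assumes N: "net_bundle A j" and p: "is_path p w w" and x: "x \<in> ccarrier (A w)"
  shows "holonomy A j (hclass p) x = holp A j p x"
proof -
  have pp: "pth p w w" using p by (simp add: is_path_pth)
  show ?thesis unfolding holonomy_def using holp_hom[OF N some_hclass[of p] pp x] by simp
qed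




definition frame :: "'k::order \<Rightarrow> 'k \<Rightarrow> 'k simplex1 list" where
  "frame w a = (if a = w then [(w,w,w)] else (SOME p. is_path p w a))"

lemma frame_path: assumes "pathwise_connected TYPE('k::order)"
  shows "pth (frame w a) w (a::'k) \<and> frame w a \<noteq> []"
proof (cases "a = w")
  case True then show ?thesis by (simp add: frame_def)
next
  case False
  have "\<exists>p. is_path p w a" using assms unfolding pathwise_connected_def by blast
  then have "is_path (SOME p. is_path p w a) w a" by (rule someI_ex)
  then show ?thesis using False by (simp add: frame_def is_path_pth)
qed

lemma flip_www[simp]: "flip (w,w,w) = (w,w,w)" by (simp add: flip_def)

lemma frame_w[simp]: "frame w w = [(w,w,w)]" by (simp add: frame_def)

lemma hol1_net: assumes N: "net_bundle A j" and ao: "a \<le> w" and x: "x \<in> ccarrier (A a)"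
  shows "hol1 A j (w,a,w) x = j w a x"
proof (rule hol1_char[OF N _ _ _ _, of _ w])
  show "is_simplex1 (w, a, w)" using ao by simp
  have "j w a x \<in> ccarrier (A w)" by (rule si_in[OF nb_si[OF N ao] x])
  then show "j w a x \<in> ccarrier (A (d0 (w, a, w)))" "j w (d0 (w, a, w)) (j w a x) = j w (d1 (w, a, w)) x"
    using nb_refl[OF N] by auto
qed (use x in auto)

lemma hol1_www: "net_bundle A j \<Longrightarrow> x \<in> ccarrier (A w) \<Longrightarrow> hol1 A j (w,w,w) x = x"
  using hol1_net[of A j w w x] nb_refl by fastforce

lemma holp_www: "net_bundle A j \<Longrightarrow> x \<in> ccarrier (A w) \<Longrightarrow> holp A j [(w,w,w)] x = x"
  using hol1_www by (simp add: holp_simps)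

lemma nm_sm: "net_morphism A j B i \<phi> \<Longrightarrow> star_morphism (\<phi> a) (A a) (B a)"
  unfolding net_morphism_def by blast

lemma nm_hol1:
  assumes NA: "net_bundle A j" and NB: "net_bundle B i" and M: "net_morphism A j B i \<phi>"
    and b: "is_simplex1 b" and x: "x \<in> ccarrier (A (d1 b))"
  shows "\<phi> (d0 b) (hol1 A j b x) = hol1 B i b (\<phi> (d1 b) x)"
proof -
  note h = hol1_in[OF NA b x]
  have le: "d0 b \<le> supp b" "d1 b \<le> supp b" using b unfolding is_simplex1_def by auto
  have c: "\<And>a x. a \<le> supp b \<Longrightarrow> x \<in> ccarrier (A a) \<Longrightarrow> \<phi> (supp b) (j (supp b) a x) = i (supp b) a (\<phi> a x)"
    using M unfolding net_morphism_def by blast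
  have "i (supp b) (d0 b) (\<phi> (d0 b) (hol1 A j b x)) = \<phi> (supp b) (j (supp b) (d0 b) (hol1 A j b x))"
    using c[OF le(1) conjunct1[OF h]] by simp
  also have "\<dots> = \<phi> (supp b) (j (supp b) (d1 b) x)" using h by simp
  also have "\<dots> = i (supp b) (d1 b) (\<phi> (d1 b) x)" using c[OF le(2) x] by simp
  finally have e: "i (supp b) (d0 b) (\<phi> (d0 b) (hol1 A j b x)) = i (supp b) (d1 b) (\<phi> (d1 b) x)" .
  show ?thesis
    by (rule sym, rule hol1_char[OF NB b order_refl sm_in[OF nm_sm[OF M] x] sm_in[OF nm_sm[OF M] conjunct1[OF h]] e])
qed

lemma nm_holp:
  assumes NA: "net_bundle A j" and NB: "net_bundle B i" and M: "net_morphism A j B i \<phi>"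
  shows "pth p a a' \<Longrightarrow> x \<in> ccarrier (A a) \<Longrightarrow> \<phi> a' (holp A j p x) = holp B i p (\<phi> a x)"
proof (induction p arbitrary: a x)
  case Nil then show ?case by (simp add: holp_simps)
next
  case (Cons b p)
  have b: "is_simplex1 b" "d1 b = a" "pth p (d0 b) a'" using Cons.prems by auto
  have x: "x \<in> ccarrier (A (d1 b))" using Cons.prems b by simp
  have "\<phi> a' (holp A j (b#p) x) = \<phi> a' (holp A j p (hol1 A j b x))" by (simp add: holp_simps)
  also have "\<dots> = holp B i p (\<phi> (d0 b) (hol1 A j b x))"
    by (rule Cons.IH[OF b(3) conjunct1[OF hol1_in[OF NA b(1) x]]])
  also have "\<dots> = holp B i p (hol1 B i b (\<phi> (d1 b) x))" using nm_hol1[OF NA NB M b(1) x] by simp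
  also have "\<dots> = holp B i (b#p) (\<phi> a x)" using b(2) by (simp add: holp_simps)
  finally show ?case .
qed

definition constr :: "'k::order \<Rightarrow> ('k \<Rightarrow> 'a cstar) \<Rightarrow> ('k \<Rightarrow> 'k \<Rightarrow> 'a \<Rightarrow> 'a) \<Rightarrow>
   ('k \<Rightarrow> 'b cstar) \<Rightarrow> ('k \<Rightarrow> 'k \<Rightarrow> 'b \<Rightarrow> 'b) \<Rightarrow> ('a \<Rightarrow> 'b) \<Rightarrow> 'k \<Rightarrow> 'a \<Rightarrow> 'b" where
  "constr w A j B i \<eta> a = holp B i (frame w a) \<circ> (\<eta> \<circ> holp A j (rev_path (frame w a)))"

lemma holp_rev': "net_bundle A j \<Longrightarrow> pth p a a' \<Longrightarrow> y \<in> ccarrier (A a') \<Longrightarrow>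
   holp A j p (holp A j (rev_path p) y) = y"
  using holp_rev[OF _ pth_rev, of A j p a a' y] by simp

lemma loop_path: "pth p w a \<Longrightarrow> p \<noteq> [] \<Longrightarrow> is_simplex1 b \<Longrightarrow> d1 b = a \<Longrightarrow> pth q w a' \<Longrightarrow> d0 b = a' \<Longrightarrow>
   is_path (p @ [b] @ rev_path q) w w"
  by (auto simp: is_path_pth pth_append intro!: pth_rev)

lemma constr_comm:
  fixes w :: "'k::order"
  assumes conn: "pathwise_connected TYPE('k::order)"
    and NA: "net_bundle A j" and NB: "net_bundle B i" and eta: "star_morphism \<eta> (A w) (B w)"
    and eq: "equivariant \<eta> (A w) (pi1 w) (holonomy A j) (B w) (holonomy B i)"
    and b: "is_simplex1 b" and x: "x \<in> ccarrier (A (d1 b))"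
  shows "constr w A j B i \<eta> (d0 b) (hol1 A j b x) = hol1 B i b (constr w A j B i \<eta> (d1 b) x)"
proof -
  define P1 where "P1 = frame w (d1 b)"
  define P0 where "P0 = frame w (d0 b)"
  have p1: "pth P1 w (d1 b)" "P1 \<noteq> []" using frame_path[OF conn] unfolding P1_def by auto
  have p0: "pth P0 w (d0 b)" "P0 \<noteq> []" using frame_path[OF conn] unfolding P0_def by auto
  define l where "l = P1 @ [b] @ rev_path P0"
  have lp: "is_path l w w" unfolding l_def by (rule loop_path[OF p1(1,2) b refl p0(1) refl])
  have lpth: "pth l w w" using lp by (simp add: is_path_pth)
  define z where "z = holp A j (rev_path P1) x"
  have z: "z \<in> ccarrier (A w)" unfolding z_def by (rule holp_in[OF NA pth_rev[OF p1(1)] x])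
  have Pz: "holp A j P1 z = x" unfolding z_def by (rule holp_rev'[OF NA p1(1) x])
  have hx: "hol1 A j b x \<in> ccarrier (A (d0 b))" using hol1_in[OF NA b x] by simp
  have lz: "holp A j l z = holp A j (rev_path P0) (hol1 A j b x)"
    unfolding l_def using Pz by (simp add: holp_simps)
  have ez: "\<eta> z \<in> ccarrier (B w)" by (rule sm_in[OF eta z])
  have q1: "holp B i P1 (\<eta> z) \<in> ccarrier (B (d1 b))" by (rule holp_in[OF NB p1(1) ez])
  have q2: "hol1 B i b (holp B i P1 (\<eta> z)) \<in> ccarrier (B (d0 b))" using hol1_in[OF NB b q1] by simp
  have "constr w A j B i \<eta> (d0 b) (hol1 A j b x) = holp B i P0 (\<eta> (holp A j (rev_path P0) (hol1 A j b x)))"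
    unfolding constr_def P0_def by simp
  also have "\<dots> = holp B i P0 (\<eta> (holonomy A j (hclass l) z))"
    using holonomy_eq[OF NA lp z] lz by simp
  also have "\<dots> = holp B i P0 (holonomy B i (hclass l) (\<eta> z))"
    using eq pi1_carrier[OF lp] z unfolding equivariant_def by simp
  also have "\<dots> = holp B i P0 (holp B i l (\<eta> z))" using holonomy_eq[OF NB lp ez] by simp
  also have "\<dots> = holp B i P0 (holp B i (rev_path P0) (hol1 B i b (holp B i P1 (\<eta> z))))"
    unfolding l_def by (simp add: holp_simps)
  also have "\<dots> = hol1 B i b (holp B i P1 (\<eta> z))" by (rule holp_rev'[OF NB p0(1) q2])
  also have "\<dots> = hol1 B i b (constr w A j B i \<eta> (d1 b) x)"
    unfolding constr_def P1_def z_def by simp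
  finally show ?thesis .
qed

lemma constr_sm:
  fixes w :: "'k::order"
  assumes conn: "pathwise_connected TYPE('k::order)"
    and NA: "net_bundle A j" and NB: "net_bundle B i" and eta: "star_morphism \<eta> (A w) (B w)"
  shows "star_morphism (constr w A j B i \<eta> a) (A a) (B (a::'k))"
proof -
  have p: "pth (frame w a) w a" using frame_path[OF conn] by auto
  show ?thesis unfolding constr_def
    by (rule sm_comp[OF sm_comp[OF si_sm[OF holp_si[OF NA pth_rev[OF p]]] eta] si_sm[OF holp_si[OF NB p]]])
qed

lemma constr_si:
  fixes w :: "'k::order"
  assumes conn: "pathwise_connected TYPE('k::order)"
    and NA: "net_bundle A j" and NB: "net_bundle B i" and eta: "star_isomorphism \<eta> (A w) (B w)"
  shows "star_isomorphism (constr w A j B i \<eta> a) (A a) (B (a::'k))"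
proof -
  have p: "pth (frame w a) w a" using frame_path[OF conn] by auto
  show ?thesis unfolding constr_def
    by (rule si_comp[OF si_comp[OF holp_si[OF NA pth_rev[OF p]] eta] holp_si[OF NB p]])
qed

lemma constr_net:
  fixes w :: "'k::order"
  assumes conn: "pathwise_connected TYPE('k::order)"
    and NA: "net_bundle A j" and NB: "net_bundle B i" and eta: "star_morphism \<eta> (A w) (B w)"
    and eq: "equivariant \<eta> (A w) (pi1 w) (holonomy A j) (B w) (holonomy B i)"
  shows "net_morphism A j B i (constr w A j B i \<eta>)"
  unfolding net_morphism_def
proof (intro conjI allI impI ballI)
  fix a show "star_morphism (constr w A j B i \<eta> a) (A a) (B a)" by (rule constr_sm[OF conn NA NB eta])
next
  fix a u x assume ao: "a \<le> (u::'k)" and x: "x \<in> ccarrier (A a)"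
  have b: "is_simplex1 (u,a,u)" using ao by simp
  have cx: "constr w A j B i \<eta> a x \<in> ccarrier (B a)" by (rule sm_in[OF constr_sm[OF conn NA NB eta] x])
  have "constr w A j B i \<eta> u (j u a x) = constr w A j B i \<eta> (d0 (u,a,u)) (hol1 A j (u,a,u) x)"
    using hol1_net[OF NA ao x] by simp
  also have "\<dots> = hol1 B i (u,a,u) (constr w A j B i \<eta> (d1 (u,a,u)) x)"
    by (rule constr_comm[OF conn NA NB eta eq b]) (use x in simp)
  also have "\<dots> = i u a (constr w A j B i \<eta> a x)" using hol1_net[OF NB ao cx] by simp
  finally show "constr w A j B i \<eta> u (j u a x) = i u a (constr w A j B i \<eta> a x)" .
qed

lemma constr_w:
  assumes NA: "net_bundle A j" and NB: "net_bundle B i" and eta: "star_morphism \<eta> (A w) (B w)"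
    and x: "x \<in> ccarrier (A w)"
  shows "constr w A j B i \<eta> w x = \<eta> x"
  unfolding constr_def using holp_www[OF NA x] holp_www[OF NB sm_in[OF eta x]] by simp




lemma is_path_append: "is_path p a m \<Longrightarrow> is_path q m a' \<Longrightarrow> is_path (p @ q) a a'"
  by (auto simp: is_path_pth pth_append)

context
  fixes w :: "'k::order" and C :: "'c cstar" and \<alpha>
  assumes conn: "pathwise_connected TYPE('k)" and dy: "dynsys C (pi1 w) \<alpha>"
begin

lemma dy_alg: "unital_cstar_alg C" using dy unfolding dynsys_def by blast

lemma dy_si: "is_path p w w \<Longrightarrow> star_isomorphism (\<alpha> (hclass p)) C C"
  using dy pi1_carrier unfolding dynsys_def by blast

lemma dy_hc: "is_path p w w \<Longrightarrow> is_path q w w \<Longrightarrow> x \<in> ccarrier C \<Longrightarrow>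
   \<alpha> (hclass p) (\<alpha> (hclass q) x) = \<alpha> (hclass (q @ p)) x"
  using dy pi1_carrier[of p w] pi1_carrier[of q w] pi1_mult[of w p q] unfolding dynsys_def by metis

lemma dy_one: "x \<in> ccarrier C \<Longrightarrow> \<alpha> (hclass [(w,w,w)]) x = x"
  using dy pi1_one[of w] unfolding dynsys_def by metis

definition LL :: "'k \<Rightarrow> 'k \<Rightarrow> 'k simplex1 list" where
  "LL a u = frame w a @ [(u,a,u)] @ rev_path (frame w u)"

definition Sj :: "'k \<Rightarrow> 'k \<Rightarrow> 'c \<Rightarrow> 'c" where
  "Sj u a = \<alpha> (hclass (LL a u))"

lemma fp: "pth (frame w a) w a" "frame w a \<noteq> []" using frame_path[OF conn] by auto

lemma LL_path: "a \<le> u \<Longrightarrow> is_path (LL a u) w w"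
  unfolding LL_def by (rule loop_path[OF fp(1) fp(2)]) (auto intro: fp)

lemma last_frame: "is_simplex1 (last (frame w a)) \<and> d0 (last (frame w a)) = a"
  using pth_last[OF fp(1) fp(2)] by auto

lemma LL_comp: assumes ea: "e \<le> a" and au: "a \<le> u"
  shows "homotopic (LL e a @ LL a u) (LL e u)"
proof -
  let ?q = "frame w e @ [(a,e,a)]"
  have prev: "homotopic (?q @ rev_path (frame w a) @ frame w a) ?q"
    by (rule hom_cancel_path[OF fp(1)]) (use ea in auto)
  then have h1: "homotopic ((?q @ rev_path (frame w a) @ frame w a) @ [(u,a,u)] @ rev_path (frame w u))
       (?q @ [(u,a,u)] @ rev_path (frame w u))"
    using hom_cong[OF prev, of "[]" "[(u,a,u)] @ rev_path (frame w u)"] by simp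
  have c: "is_simplex2 ((u,a,u),(u,e,u),(a,e,a),u)" using ea au by (auto simp: simp2_iff intro: order_trans)
  have h2: "homotopic (frame w e @ [(a,e,a),(u,a,u)] @ rev_path (frame w u)) (frame w e @ [(u,e,u)] @ rev_path (frame w u))"
    by (rule hom_2s_ctx[OF c])
  show ?thesis using hom_trans[OF h1 ] h2 unfolding LL_def by simp
qed

lemma S_net: "net_bundle (\<lambda>_. C) Sj"
  unfolding net_bundle_def
proof (intro conjI allI impI ballI)
  show "unital_cstar_alg C" for x by (rule dy_alg)
next
  fix a u :: 'k assume au: "a \<le> u"
  have si: "star_isomorphism (Sj u a) C C" unfolding Sj_def by (rule dy_si[OF LL_path[OF au]])
  then show "unital_star_morphism (Sj u a) C C"
    unfolding unital_star_morphism_def using si_unit[OF dy_alg dy_alg si] si_sm by blast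
  show "bij_betw (Sj u a) (ccarrier C) (ccarrier C)" using si unfolding star_isomorphism_def by blast
next
  fix e a u :: 'k and x assume ea: "e \<le> a" and au: "a \<le> u" and x: "x \<in> ccarrier C"
  have "Sj u a (Sj a e x) = \<alpha> (hclass (LL e a @ LL a u)) x"
    unfolding Sj_def by (rule dy_hc[OF LL_path[OF au] LL_path[OF ea] x])
  also have "\<dots> = Sj u e x" unfolding Sj_def using hclass_eq[OF LL_comp[OF ea au]] by simp
  finally show "Sj u a (Sj a e x) = Sj u e x" .
qed

definition MM :: "'k simplex1 \<Rightarrow> 'k simplex1 list" where
  "MM b = frame w (d1 b) @ [b] @ rev_path (frame w (d0 b))"

lemma MM_path: "is_simplex1 b \<Longrightarrow> is_path (MM b) w w"
  unfolding MM_def by (rule loop_path[OF fp(1) fp(2)]) (auto intro: fp)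

lemma S_hol1: assumes b: "is_simplex1 b" and x: "x \<in> ccarrier C"
  shows "hol1 (\<lambda>_. C) Sj b x = \<alpha> (hclass (MM b)) x"
proof (rule hol1_char[OF S_net b order_refl])
  show "x \<in> ccarrier C" by (rule x)
  show "\<alpha> (hclass (MM b)) x \<in> ccarrier C" by (rule si_in[OF dy_si[OF MM_path[OF b]] x])
  have le: "d0 b \<le> supp b" "d1 b \<le> supp b" using b unfolding is_simplex1_def by auto
  let ?S = "supp b"
  have "Sj ?S (d0 b) (\<alpha> (hclass (MM b)) x) = \<alpha> (hclass (MM b @ LL (d0 b) ?S)) x"
    unfolding Sj_def by (rule dy_hc[OF LL_path[OF le(1)] MM_path[OF b] x])
  also have "\<dots> = \<alpha> (hclass (LL (d1 b) ?S)) x"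
  proof -
    let ?q = "frame w (d1 b) @ [b]"
    have prev: "homotopic (?q @ rev_path (frame w (d0 b)) @ frame w (d0 b)) ?q"
      by (rule hom_cancel_path[OF fp(1)]) (use b in auto)
    then have h1: "homotopic ((?q @ rev_path (frame w (d0 b)) @ frame w (d0 b)) @ [(?S,d0 b,?S)] @ rev_path (frame w ?S))
       (?q @ [(?S,d0 b,?S)] @ rev_path (frame w ?S))"
      using hom_cong[OF prev, of "[]" "[(?S,d0 b,?S)] @ rev_path (frame w ?S)"] by simp
    have c: "is_simplex2 ((?S,d0 b,?S),(?S,d1 b,?S),b,?S)" using b le by (auto simp: simp2_iff)
    have h2: "homotopic (frame w (d1 b) @ [b,(?S,d0 b,?S)] @ rev_path (frame w ?S))
        (frame w (d1 b) @ [(?S,d1 b,?S)] @ rev_path (frame w ?S))"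
      by (rule hom_2s_ctx[OF c])
    have "homotopic (MM b @ LL (d0 b) ?S) (LL (d1 b) ?S)"
      using hom_trans[OF h1] h2 unfolding LL_def MM_def by simp
    then show ?thesis using hclass_eq by metis
  qed
  finally show "Sj ?S (d0 b) (\<alpha> (hclass (MM b)) x) = Sj ?S (d1 b) x" unfolding Sj_def .
qed

lemma S_tele: "pth q a a' \<Longrightarrow> q \<noteq> [] \<Longrightarrow> x \<in> ccarrier C \<Longrightarrow>
   holp (\<lambda>_. C) Sj q x = \<alpha> (hclass (frame w a @ q @ rev_path (frame w a'))) x"
proof (induction q arbitrary: a' rule: rev_induct)
  case Nil then show ?case by simp
next
  case (snoc b q')
  from snoc.prems(1) obtain y where q': "pth q' a y" and b: "is_simplex1 b" "d1 b = y" "d0 b = a'"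
    by (auto simp: pth_append)
  show ?case
  proof (cases "q' = []")
    case True
    then have "a = d1 b" using q' b by simp
    then show ?thesis using True S_hol1[OF b(1) snoc.prems(3)] b by (simp add: holp_simps MM_def)
  next
    case False
    have N: "is_path (frame w a @ q' @ rev_path (frame w y)) w w"
      using fp q' False by (auto simp: is_path_pth pth_append intro!: pth_rev)
    have hq: "holp (\<lambda>_. C) Sj q' x \<in> ccarrier C" using holp_in[OF S_net q' snoc.prems(3)] .
    have "holp (\<lambda>_. C) Sj (q' @ [b]) x = hol1 (\<lambda>_. C) Sj b (holp (\<lambda>_. C) Sj q' x)"
      by (simp add: holp_simps)
    also have "\<dots> = \<alpha> (hclass (MM b)) (\<alpha> (hclass (frame w a @ q' @ rev_path (frame w y))) x)"
      using S_hol1[OF b(1) hq] snoc.IH[OF q' False snoc.prems(3)] by simp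
    also have "\<dots> = \<alpha> (hclass ((frame w a @ q' @ rev_path (frame w y)) @ MM b)) x"
      by (rule dy_hc[OF MM_path[OF b(1)] N snoc.prems(3)])
    also have "\<dots> = \<alpha> (hclass (frame w a @ (q' @ [b]) @ rev_path (frame w a'))) x"
    proof -
      let ?q = "frame w a @ q'"
      have prev: "homotopic (?q @ rev_path (frame w y) @ frame w y) ?q"
        by (rule hom_cancel_path[OF fp(1)]) (use False pth_last[OF q' False] in auto)
      then have "homotopic ((?q @ rev_path (frame w y) @ frame w y) @ [b] @ rev_path (frame w a'))
          (?q @ [b] @ rev_path (frame w a'))"
        using hom_cong[OF prev, of "[]" "[b] @ rev_path (frame w a')"] by simp
      then have "hclass ((?q @ rev_path (frame w y) @ frame w y) @ [b] @ rev_path (frame w a'))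
          = hclass (?q @ [b] @ rev_path (frame w a'))" by (rule hclass_eq)
      then show ?thesis using b unfolding MM_def by simp
    qed
    finally show ?thesis .
  qed
qed

lemma S_holonomy: assumes X: "X \<in> carrier (pi1 w)" and x: "x \<in> ccarrier C"
  shows "holonomy (\<lambda>_. C) Sj X x = \<alpha> X x"
proof -
  obtain p where p: "is_path p w w" "X = hclass p" using pi1_carrierE[OF X] by blast
  have pp: "pth p w w" "p \<noteq> []" using p(1) by (auto simp: is_path_pth)
  have "holonomy (\<lambda>_. C) Sj X x = holp (\<lambda>_. C) Sj p x" using holonomy_eq[OF S_net p(1)] x p(2) by simp
  also have "\<dots> = \<alpha> (hclass ([(w,w,w)] @ p @ [(w,w,w)])) x" using S_tele[OF pp x] by simp
  also have "\<dots> = \<alpha> (hclass p) x"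
  proof -
    have l: "is_simplex1 (last p) \<and> d0 (last p) = w" "is_simplex1 (hd p) \<and> d1 (hd p) = w"
      using pth_last[OF pp] pp by (cases p; auto)+
    have prev: "homotopic (p @ [(w,w,w)]) p" by (rule hom_runit_list) (use pp l in auto)
    then have h1: "homotopic ([(w,w,w)] @ p @ [(w,w,w)]) ([(w,w,w)] @ p)"
      using hom_cong[OF prev, of "[(w,w,w)]" "[]"] by simp
    have h2: "homotopic ((w,w,w) # p) p" by (rule hom_lunit_list) (use pp l in auto)
    show ?thesis using hclass_eq[OF hom_trans[OF h1]] h2 by simp
  qed
  finally show ?thesis using p(2) by simp
qed

lemma surj_part: "\<exists>(A :: 'k \<Rightarrow> 'c cstar) j. net_bundle A j \<and> dynsys_iso (A w) (pi1 w) (holonomy A j) C \<alpha>"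
proof (intro exI conjI)
  show "net_bundle (\<lambda>_. C) Sj" by (rule S_net)
  show "dynsys_iso C (pi1 w) (holonomy (\<lambda>_. C) Sj) C \<alpha>"
    unfolding dynsys_iso_def equivariant_def
    by (rule exI[of _ "\<lambda>x. x"]) (use si_id'[OF dy_alg] S_holonomy in auto)
qed

end




lemma hol_dynsys: assumes N: "net_bundle A j" shows "dynsys (A w) (pi1 w) (holonomy A j)"
  unfolding dynsys_def
proof (intro conjI ballI)
  show "unital_cstar_alg (A w)" by (rule nb_alg[OF N])
next
  fix X assume X: "X \<in> carrier (pi1 w)"
  obtain p where p: "is_path p w w" "X = hclass p" using pi1_carrierE[OF X] by blast
  have q: "pth (SOME q. q \<in> hclass p) w w" using some_in_class[OF p(1)] by (simp add: is_path_pth)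
  show "star_isomorphism (holonomy A j X) (A w) (A w)"
    unfolding holonomy_def p(2) by (rule holp_si[OF N q])
next
  fix X Y x assume X: "X \<in> carrier (pi1 w)" and Y: "Y \<in> carrier (pi1 w)" and x: "x \<in> ccarrier (A w)"
  obtain p where p: "is_path p w w" "X = hclass p" using pi1_carrierE[OF X] by blast
  obtain q where q: "is_path q w w" "Y = hclass q" using pi1_carrierE[OF Y] by blast
  have qp: "is_path (q @ p) w w" by (rule is_path_append[OF q(1) p(1)])
  have hq: "holp A j q x \<in> ccarrier (A w)" using holp_in[OF N _ x] q(1) by (simp add: is_path_pth)
  have "holonomy A j (X \<otimes>\<^bsub>pi1 w\<^esub> Y) x = holp A j (q @ p) x"
    unfolding p(2) q(2) pi1_mult using holonomy_eq[OF N qp x] .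
  also have "\<dots> = holp A j p (holp A j q x)" by (simp add: holp_simps)
  also have "\<dots> = holonomy A j X (holonomy A j Y x)"
    using holonomy_eq[OF N p(1) hq] holonomy_eq[OF N q(1) x] p(2) q(2) by simp
  finally show "holonomy A j (X \<otimes>\<^bsub>pi1 w\<^esub> Y) x = holonomy A j X (holonomy A j Y x)" .
next
  fix x assume x: "x \<in> ccarrier (A w)"
  have "is_path [(w,w,w)] w w" by (simp add: is_path_def)
  then show "holonomy A j \<one>\<^bsub>pi1 w\<^esub> x = x"
    unfolding pi1_one using holonomy_eq[OF N _ x] holp_www[OF N x] by simp
qed

lemma nm_equiv: assumes NA: "net_bundle A j" and NB: "net_bundle B i" and M: "net_morphism A j B i \<phi>"
  shows "equivariant (\<phi> w) (A w) (pi1 w) (holonomy A j) (B w) (holonomy B i)"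
  unfolding equivariant_def
proof (intro ballI)
  fix X x assume X: "X \<in> carrier (pi1 w)" and x: "x \<in> ccarrier (A w)"
  obtain p where p: "is_path p w w" "X = hclass p" using pi1_carrierE[OF X] by blast
  have pp: "pth p w w" using p(1) by (simp add: is_path_pth)
  have fx: "\<phi> w x \<in> ccarrier (B w)" by (rule sm_in[OF nm_sm[OF M] x])
  show "\<phi> w (holonomy A j X x) = holonomy B i X (\<phi> w x)"
    unfolding p(2) using holonomy_eq[OF NA p(1) x] holonomy_eq[OF NB p(1) fx] nm_holp[OF NA NB M pp x]
    by simp
qed

lemma faithful:
  fixes w :: "'k::order"
  assumes conn: "pathwise_connected TYPE('k)"
    and NA: "net_bundle A j" and NB: "net_bundle B i" and M1: "net_morphism A j B i \<phi>"
    and M2: "net_morphism A j B i \<psi>" and eq: "\<forall>x\<in>ccarrier (A w). \<phi> w x = \<psi> w x"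
    and x: "x \<in> ccarrier (A a)"
  shows "\<phi> a x = \<psi> a x"
proof -
  have p: "pth (frame w a) w a" using frame_path[OF conn] by blast
  define z where "z = holp A j (rev_path (frame w a)) x"
  have z: "z \<in> ccarrier (A w)" unfolding z_def by (rule holp_in[OF NA pth_rev[OF p] x])
  have xz: "x = holp A j (frame w a) z" unfolding z_def by (rule holp_rev'[OF NA p x, symmetric])
  show ?thesis unfolding xz using nm_holp[OF NA NB M1 p z] nm_holp[OF NA NB M2 p z] eq z by simp
qed

theorem proposition3p8:
  fixes w :: "'k::order"
  assumes "pathwise_connected TYPE('k)"
  shows
    \<comment> \<open>the holonomy of a net bundle is a C*-dynamical system with group pi_1^o(K)\<close>
    "(\<forall>(A :: 'k \<Rightarrow> 'a cstar) j. net_bundle A j \<longrightarrow> dynsys (A w) (pi1 w) (holonomy A j))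
   \<comment> \<open>injectivity and well-definedness on isomorphism classes\<close>
   \<and> (\<forall>(A :: 'k \<Rightarrow> 'a cstar) j (B :: 'k \<Rightarrow> 'b cstar) i. net_bundle A j \<longrightarrow> net_bundle B i \<longrightarrow>
        (net_iso A j B i \<longleftrightarrow> dynsys_iso (A w) (pi1 w) (holonomy A j) (B w) (holonomy B i)))
   \<comment> \<open>surjectivity on isomorphism classes\<close>
   \<and> (\<forall>(C :: 'c cstar) \<alpha>. dynsys C (pi1 w) \<alpha> \<longrightarrow>
        (\<exists>(A :: 'k \<Rightarrow> 'c cstar) j. net_bundle A j \<and> dynsys_iso (A w) (pi1 w) (holonomy A j) C \<alpha>))
   \<comment> \<open>the functor (phi, id_K) |-> phi_o is well defined, full and faithful\<close>
   \<and> (\<forall>(A :: 'k \<Rightarrow> 'a cstar) j (B :: 'k \<Rightarrow> 'b cstar) i. net_bundle A j \<longrightarrow> net_bundle B i \<longrightarrow>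
        (\<forall>\<phi>. net_morphism A j B i \<phi> \<longrightarrow>
            star_morphism (\<phi> w) (A w) (B w) \<and>
            equivariant (\<phi> w) (A w) (pi1 w) (holonomy A j) (B w) (holonomy B i)) \<and>
        (\<forall>\<eta>. star_morphism \<eta> (A w) (B w) \<and>
              equivariant \<eta> (A w) (pi1 w) (holonomy A j) (B w) (holonomy B i) \<longrightarrow>
            (\<exists>\<phi>. net_morphism A j B i \<phi> \<and> (\<forall>x\<in>ccarrier (A w). \<phi> w x = \<eta> x))) \<and>
        (\<forall>\<phi> \<psi>. net_morphism A j B i \<phi> \<longrightarrow> net_morphism A j B i \<psi> \<longrightarrow>
            (\<forall>x\<in>ccarrier (A w). \<phi> w x = \<psi> w x) \<longrightarrow>
            (\<forall>a. \<forall>x\<in>ccarrier (A a). \<phi> a x = \<psi> a x)))"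
proof -
  have T1: "(\<forall>(A :: 'k \<Rightarrow> 'a cstar) j. net_bundle A j \<longrightarrow> dynsys (A w) (pi1 w) (holonomy A j))"
  proof (intro allI impI)
    fix A :: "'k \<Rightarrow> 'a cstar" and j assume "net_bundle A j"
    then show "dynsys (A w) (pi1 w) (holonomy A j)" by (rule hol_dynsys)
  qed
  have T2: "(\<forall>(A :: 'k \<Rightarrow> 'a cstar) j (B :: 'k \<Rightarrow> 'b cstar) i. net_bundle A j \<longrightarrow> net_bundle B i \<longrightarrow>
        (net_iso A j B i \<longleftrightarrow> dynsys_iso (A w) (pi1 w) (holonomy A j) (B w) (holonomy B i)))"
  proof (intro allI impI)
    fix A :: "'k \<Rightarrow> 'a cstar" and j and B :: "'k \<Rightarrow> 'b cstar" and i
    assume NA: "net_bundle A j" and NB: "net_bundle B i"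
    show "net_iso A j B i = dynsys_iso (A w) (pi1 w) (holonomy A j) (B w) (holonomy B i)"
    proof
      assume "net_iso A j B i"
      then obtain \<phi> where M: "net_morphism A j B i \<phi>" and si: "\<forall>w. star_isomorphism (\<phi> w) (A w) (B w)"
        unfolding net_iso_def by blast
      show "dynsys_iso (A w) (pi1 w) (holonomy A j) (B w) (holonomy B i)"
        unfolding dynsys_iso_def using si nm_equiv[OF NA NB M] by blast
    next
      assume "dynsys_iso (A w) (pi1 w) (holonomy A j) (B w) (holonomy B i)"
      then obtain \<eta> where si: "star_isomorphism \<eta> (A w) (B w)"
        and eq: "equivariant \<eta> (A w) (pi1 w) (holonomy A j) (B w) (holonomy B i)"
        unfolding dynsys_iso_def by blast
      show "net_iso A j B i" unfolding net_iso_def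
        using constr_net[OF assms NA NB si_sm[OF si] eq] constr_si[OF assms NA NB si] by blast
    qed
  qed
  have T3: "(\<forall>(C :: 'c cstar) \<alpha>. dynsys C (pi1 w) \<alpha> \<longrightarrow>
        (\<exists>(A :: 'k \<Rightarrow> 'c cstar) j. net_bundle A j \<and> dynsys_iso (A w) (pi1 w) (holonomy A j) C \<alpha>))"
  proof (intro allI impI)
    fix C :: "'c cstar" and \<alpha> assume "dynsys C (pi1 w) \<alpha>"
    then show "\<exists>(A :: 'k \<Rightarrow> 'c cstar) j. net_bundle A j \<and> dynsys_iso (A w) (pi1 w) (holonomy A j) C \<alpha>"
      by (rule surj_part[OF assms])
  qed
  have T4: "(\<forall>(A :: 'k \<Rightarrow> 'a cstar) j (B :: 'k \<Rightarrow> 'b cstar) i. net_bundle A j \<longrightarrow> net_bundle B i \<longrightarrow>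
        (\<forall>\<phi>. net_morphism A j B i \<phi> \<longrightarrow>
            star_morphism (\<phi> w) (A w) (B w) \<and>
            equivariant (\<phi> w) (A w) (pi1 w) (holonomy A j) (B w) (holonomy B i)) \<and>
        (\<forall>\<eta>. star_morphism \<eta> (A w) (B w) \<and>
              equivariant \<eta> (A w) (pi1 w) (holonomy A j) (B w) (holonomy B i) \<longrightarrow>
            (\<exists>\<phi>. net_morphism A j B i \<phi> \<and> (\<forall>x\<in>ccarrier (A w). \<phi> w x = \<eta> x))) \<and>
        (\<forall>\<phi> \<psi>. net_morphism A j B i \<phi> \<longrightarrow> net_morphism A j B i \<psi> \<longrightarrow>
            (\<forall>x\<in>ccarrier (A w). \<phi> w x = \<psi> w x) \<longrightarrow>
            (\<forall>a. \<forall>x\<in>ccarrier (A a). \<phi> a x = \<psi> a x)))"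
  proof (intro allI impI)
    fix A :: "'k \<Rightarrow> 'a cstar" and j and B :: "'k \<Rightarrow> 'b cstar" and i
    assume NA: "net_bundle A j" and NB: "net_bundle B i"
    have P1: "\<forall>\<phi>. net_morphism A j B i \<phi> \<longrightarrow>
            star_morphism (\<phi> w) (A w) (B w) \<and>
            equivariant (\<phi> w) (A w) (pi1 w) (holonomy A j) (B w) (holonomy B i)"
      using nm_sm nm_equiv[OF NA NB] by blast
    have P2: "\<forall>\<eta>. star_morphism \<eta> (A w) (B w) \<and>
              equivariant \<eta> (A w) (pi1 w) (holonomy A j) (B w) (holonomy B i) \<longrightarrow>
            (\<exists>\<phi>. net_morphism A j B i \<phi> \<and> (\<forall>x\<in>ccarrier (A w). \<phi> w x = \<eta> x))"
    proof (intro allI impI)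
      fix \<eta> assume h: "star_morphism \<eta> (A w) (B w) \<and>
              equivariant \<eta> (A w) (pi1 w) (holonomy A j) (B w) (holonomy B i)"
      show "\<exists>\<phi>. net_morphism A j B i \<phi> \<and> (\<forall>x\<in>ccarrier (A w). \<phi> w x = \<eta> x)"
        using constr_net[OF assms NA NB conjunct1[OF h] conjunct2[OF h]] constr_w[OF NA NB conjunct1[OF h]] by blast
    qed
    have P3: "\<forall>\<phi> \<psi>. net_morphism A j B i \<phi> \<longrightarrow> net_morphism A j B i \<psi> \<longrightarrow>
            (\<forall>x\<in>ccarrier (A w). \<phi> w x = \<psi> w x) \<longrightarrow>
            (\<forall>a. \<forall>x\<in>ccarrier (A a). \<phi> a x = \<psi> a x)"
      using faithful[OF assms NA NB] by blast
    show "(\<forall>\<phi>. net_morphism A j B i \<phi> \<longrightarrow>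
            star_morphism (\<phi> w) (A w) (B w) \<and>
            equivariant (\<phi> w) (A w) (pi1 w) (holonomy A j) (B w) (holonomy B i)) \<and>
        (\<forall>\<eta>. star_morphism \<eta> (A w) (B w) \<and>
              equivariant \<eta> (A w) (pi1 w) (holonomy A j) (B w) (holonomy B i) \<longrightarrow>
            (\<exists>\<phi>. net_morphism A j B i \<phi> \<and> (\<forall>x\<in>ccarrier (A w). \<phi> w x = \<eta> x))) \<and>
        (\<forall>\<phi> \<psi>. net_morphism A j B i \<phi> \<longrightarrow> net_morphism A j B i \<psi> \<longrightarrow>
            (\<forall>x\<in>ccarrier (A w). \<phi> w x = \<psi> w x) \<longrightarrow>
            (\<forall>a. \<forall>x\<in>ccarrier (A a). \<phi> a x = \<psi> a x))"
      using P1 P2 P3 by (intro conjI)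
  qed
  show ?thesis using T1 T2 T3 T4 by (intro conjI)
qed


end
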